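(* Let $A$ be a tca and $M$ an $A$-module. Suppose $a\in A$ and $m\in M$ satisfy $am=0$. Then there exists an integer $n\ge 1$ such that $a^n(gm)=0$ for all $g\in\mathrm{GL}_\infty(\mathbb{C})$.
   Context: $\mathrm{GL}_\infty=\bigcup_n\mathrm{GL}_n$. A representation of $\mathrm{GL}_\infty$ is polynomial if it is a subquotient of a direct sum of tensor powers of $\mathbb{C}^\infty$. A tca $A$ is a commutative unital $\mathbb{C}$-algebra with a $\mathrm{GL}_\infty$-action by algebra automorphisms making $A$ a polynomial representation; an $A$-module is a module $M$ with a compatible $\mathrm{GL}_\infty$-action ($g(ax)=(ga)(gx)$) making $M$ a polynomial representation. *)

theory Defs
  imports Complex_Main
begin

definition idm :: "nat \<Rightarrow> nat \<Rightarrow> complex" where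
  "idm i j = (if i = j then 1 else 0)"

definition mmul :: "(nat \<Rightarrow> nat \<Rightarrow> complex) \<Rightarrow> (nat \<Rightarrow> nat \<Rightarrow> complex) \<Rightarrow> nat \<Rightarrow> nat \<Rightarrow> complex" where
  "mmul g h i k = (\<Sum>j\<in>{j. h j k \<noteq> 0}. g i j * h j k)"

definition fin_block :: "nat \<Rightarrow> (nat \<Rightarrow> nat \<Rightarrow> complex) \<Rightarrow> bool" where
  "fin_block n g = (\<forall>i j. (n \<le> i \<or> n \<le> j) \<longrightarrow> g i j = idm i j)"

text \<open>GL_infinity = union of the GL_n (GL_n embedded as block matrices).\<close>
definition gl_inf :: "(nat \<Rightarrow> nat \<Rightarrow> complex) set" where
  "gl_inf = {g. \<exists>n. fin_block n g \<and>
      (\<exists>h. fin_block n h \<and> mmul g h = idm \<and> mmul h g = idm)}"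

definition gl_rep :: "(complex \<Rightarrow> 'v::ab_group_add \<Rightarrow> 'v) \<Rightarrow> ((nat \<Rightarrow> nat \<Rightarrow> complex) \<Rightarrow> 'v \<Rightarrow> 'v) \<Rightarrow> bool" where
  "gl_rep sc \<rho> = (vector_space sc \<and>
     (\<forall>g\<in>gl_inf. Vector_Spaces.linear sc sc (\<rho> g)) \<and>
     (\<forall>x. \<rho> idm x = x) \<and>
     (\<forall>g\<in>gl_inf. \<forall>h\<in>gl_inf. \<forall>x. \<rho> (mmul g h) x = \<rho> g (\<rho> h x)))"

text \<open>The k-th tensor power of C^infinity: finitely supported functions on index
  lists of length k (coefficients w.r.t. the basis e_{i1} (x) ... (x) e_{ik}),
  with the action g(e_{i1} (x) ... (x) e_{ik}) = g e_{i1} (x) ... (x) g e_{ik}.\<close>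
definition tens_act :: "(nat \<Rightarrow> nat \<Rightarrow> complex) \<Rightarrow> nat \<Rightarrow> (nat list \<Rightarrow> complex) \<Rightarrow> nat list \<Rightarrow> complex" where
  "tens_act g k t l = (if length l = k then
      (\<Sum>l'\<in>{l'. t l' \<noteq> 0}. (\<Prod>r<k. g (l ! r) (l' ! r)) * t l') else 0)"

text \<open>Direct sum over the index type 'j of tensor powers of degrees deg j.\<close>
definition dsum_space :: "('j \<Rightarrow> nat) \<Rightarrow> ('j \<Rightarrow> nat list \<Rightarrow> complex) set" where
  "dsum_space deg = {v. finite {(j, l). v j l \<noteq> 0} \<and>
      (\<forall>j l. v j l \<noteq> 0 \<longrightarrow> length l = deg j)}"

definition dsum_act :: "('j \<Rightarrow> nat) \<Rightarrow> (nat \<Rightarrow> nat \<Rightarrow> complex) \<Rightarrow> ('j \<Rightarrow> nat list \<Rightarrow> complex) \<Rightarrow> 'j \<Rightarrow> nat list \<Rightarrow> complex" where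
  "dsum_act deg g v = (\<lambda>j. tens_act g (deg j) (v j))"

text \<open>(W, f) presents (sc, rho) as a subquotient: W is a subrepresentation of the
  direct sum, and f : W -> V is a surjective equivariant linear map (V = W / ker f).\<close>
definition poly_pres :: "(complex \<Rightarrow> 'v::ab_group_add \<Rightarrow> 'v) \<Rightarrow> ((nat \<Rightarrow> nat \<Rightarrow> complex) \<Rightarrow> 'v \<Rightarrow> 'v)
    \<Rightarrow> ('j \<Rightarrow> nat) \<Rightarrow> ('j \<Rightarrow> nat list \<Rightarrow> complex) set \<Rightarrow> (('j \<Rightarrow> nat list \<Rightarrow> complex) \<Rightarrow> 'v) \<Rightarrow> bool" where
  "poly_pres sc \<rho> deg W f = (W \<subseteq> dsum_space deg \<and>
     (\<lambda>j l. 0) \<in> W \<and>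
     (\<forall>v\<in>W. \<forall>w\<in>W. (\<lambda>j l. v j l + w j l) \<in> W) \<and>
     (\<forall>c. \<forall>v\<in>W. (\<lambda>j l. c * v j l) \<in> W) \<and>
     (\<forall>g\<in>gl_inf. \<forall>v\<in>W. dsum_act deg g v \<in> W) \<and>
     (\<forall>v\<in>W. \<forall>w\<in>W. f (\<lambda>j l. v j l + w j l) = f v + f w) \<and>
     (\<forall>c. \<forall>v\<in>W. f (\<lambda>j l. c * v j l) = sc c (f v)) \<and>
     f ` W = UNIV \<and>
     (\<forall>g\<in>gl_inf. \<forall>v\<in>W. f (dsum_act deg g v) = \<rho> g (f v)))"

definition poly_rep :: "'j itself \<Rightarrow> (complex \<Rightarrow> 'v::ab_group_add \<Rightarrow> 'v) \<Rightarrow> ((nat \<Rightarrow> nat \<Rightarrow> complex) \<Rightarrow> 'v \<Rightarrow> 'v) \<Rightarrow> bool" where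
  "poly_rep J sc \<rho> = (gl_rep sc \<rho> \<and>
     (\<exists>(deg :: 'j \<Rightarrow> nat) W f. poly_pres sc \<rho> deg W f))"

text \<open>tca: commutative unital C-algebra (C-structure sA) with GL_infinity acting by
  algebra automorphisms, polynomial as a representation.\<close>
definition tca :: "'j itself \<Rightarrow> (complex \<Rightarrow> 'a::comm_ring_1 \<Rightarrow> 'a) \<Rightarrow> ((nat \<Rightarrow> nat \<Rightarrow> complex) \<Rightarrow> 'a \<Rightarrow> 'a) \<Rightarrow> bool" where
  "tca J sA \<rho>A = (vector_space sA \<and>
     (\<forall>c x y. sA c (x * y) = sA c x * y) \<and>
     poly_rep J sA \<rho>A \<and>
     (\<forall>g\<in>gl_inf. \<rho>A g 1 = 1 \<and> (\<forall>x y. \<rho>A g (x * y) = \<rho>A g x * \<rho>A g y)))"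

text \<open>A-module with compatible polynomial GL_infinity action; its C-structure is
  induced from A via c \<mapsto> c\<cdot>1.\<close>
definition tca_module :: "'k itself \<Rightarrow> (complex \<Rightarrow> 'a::comm_ring_1 \<Rightarrow> 'a) \<Rightarrow> ((nat \<Rightarrow> nat \<Rightarrow> complex) \<Rightarrow> 'a \<Rightarrow> 'a)
    \<Rightarrow> ('a \<Rightarrow> 'm::ab_group_add \<Rightarrow> 'm) \<Rightarrow> ((nat \<Rightarrow> nat \<Rightarrow> complex) \<Rightarrow> 'm \<Rightarrow> 'm) \<Rightarrow> bool" where
  "tca_module K sA \<rho>A act \<rho>M = (module act \<and>
     poly_rep K (\<lambda>c x. act (sA c 1) x) \<rho>M \<and>
     (\<forall>g\<in>gl_inf. \<forall>a x. \<rho>M g (act a x) = act (\<rho>A g a) (\<rho>M g x)))"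

end

theory Submission
  imports Defs "Jordan_Normal_Form.Char_Poly"
begin


lemma mmul_block:
  assumes X: "fin_block n X" and Y: "fin_block n Y"
  shows "mmul X Y i k = (if i<n \<and> k<n then (\<Sum>j<n. X i j * Y j k) else idm i k)"
proof (cases "k < n")
  case False
  have Yk: "Y j k = idm j k" for j using Y False unfolding fin_block_def by auto
  have S: "{j. Y j k \<noteq> 0} = {k}" using Yk by (auto simp: idm_def)
  have "X i k = idm i k" using X False unfolding fin_block_def by auto
  then show ?thesis unfolding mmul_def S using False by (simp add: Yk idm_def)
next
  case True
  have sub: "{j. Y j k \<noteq> 0} \<subseteq> {..<n}"
  proof
    fix j assume "j \<in> {j. Y j k \<noteq> 0}"
    then have "Y j k \<noteq> 0" by simp
    moreover have "n \<le> j \<Longrightarrow> Y j k = 0" using Y True unfolding fin_block_def idm_def by auto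
    ultimately show "j \<in> {..<n}" by force
  qed
  have e: "mmul X Y i k = (\<Sum>j<n. X i j * Y j k)"
    unfolding mmul_def by (rule sum.mono_neutral_left) (use sub in auto)
  show ?thesis
  proof (cases "i < n")
    case True then show ?thesis using e \<open>k<n\<close> by simp
  next
    case False
    have "X i j = 0" if "j < n" for j using X False that unfolding fin_block_def idm_def by auto
    then show ?thesis using e False True by (simp add: idm_def)
  qed
qed

lemma gl_from_mat:
  assumes X: "fin_block n X" and d: "det (mat n n (\<lambda>(i,j). X i j)) \<noteq> 0"
  shows "X \<in> gl_inf"
proof -
  let ?B = "mat n n (\<lambda>(i,j). X i j)"
  have "?B \<in> Units (ring_mat TYPE(complex) n ())"
    by (rule det_non_zero_imp_unit[OF _ d]) auto
  then obtain H where H: "H \<in> carrier_mat n n" "?B * H = 1\<^sub>m n" "H * ?B = 1\<^sub>m n"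
    unfolding Units_def ring_mat_def by auto
  define h where "h i j = (if i < n \<and> j < n then H $$ (i,j) else idm i j)" for i j
  have hb: "fin_block n h" unfolding fin_block_def h_def by auto
  have 1: "mmul X h = idm"
  proof (intro ext)
    fix i k
    show "mmul X h i k = idm i k"
    proof (cases "i<n \<and> k<n")
      case True
      have "(?B * H) $$ (i,k) = (\<Sum>j<n. X i j * h j k)"
        using True H(1) by (auto simp: scalar_prod_def h_def intro!: sum.reindex_bij_witness[of _ id id])
      then show ?thesis using True H(2) by (simp add: mmul_block[OF X hb] idm_def)
    next
      case False then show ?thesis using mmul_block[OF X hb, of i k] by auto
    qed
  qed
  have 2: "mmul h X = idm"
  proof (intro ext)
    fix i k
    show "mmul h X i k = idm i k"
    proof (cases "i<n \<and> k<n")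
      case True
      have "(H * ?B) $$ (i,k) = (\<Sum>j<n. h i j * X j k)"
        using True H(1) by (auto simp: scalar_prod_def h_def intro!: sum.reindex_bij_witness[of _ id id])
      then show ?thesis using True H(3) by (simp add: mmul_block[OF hb X] idm_def)
    next
      case False then show ?thesis using mmul_block[OF hb X, of i k] by auto
    qed
  qed
  show ?thesis unfolding gl_inf_def using X hb 1 2 by blast
qed

definition pth :: "(nat \<Rightarrow> nat \<Rightarrow> complex) \<Rightarrow> complex \<Rightarrow> nat \<Rightarrow> nat \<Rightarrow> complex" where
  "pth g t i j = (1 - t) * idm i j + t * g i j"

lemma good_infinite:
  assumes g: "fin_block n g"
  shows "infinite {t. pth g t \<in> gl_inf}"
proof -
  define Bg where "Bg = mat n n (\<lambda>(i,j). g i j)"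
  have Bgc: "Bg \<in> carrier_mat n n" unfolding Bg_def by auto
  define R where "R = {z. poly (char_poly Bg) z = 0}"
  have "char_poly Bg \<noteq> 0" using degree_monic_char_poly[OF Bgc] by auto
  then have Rf: "finite R" unfolding R_def by (rule poly_roots_finite)
  define f where "f t = (t - 1) / t" for t :: complex
  have inj: "inj_on f {t. t \<noteq> 0}"
    by (rule inj_onI) (auto simp: f_def field_simps)
  have fin: "finite (f -` R \<inter> {t. t \<noteq> 0})"
    by (rule finite_vimage_IntI[OF Rf inj])
  have sub: "- {t. pth g t \<in> gl_inf} \<subseteq> insert 0 (f -` R \<inter> {t. t \<noteq> 0})"
  proof
    fix t assume tn: "t \<in> - {t. pth g t \<in> gl_inf}"
    show "t \<in> insert 0 (f -` R \<inter> {t. t \<noteq> 0})"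
    proof (rule ccontr)
      assume "t \<notin> insert 0 (f -` R \<inter> {t. t \<noteq> 0})"
      then have t0: "t \<noteq> 0" and fR: "f t \<notin> R" by auto
      have "\<not> eigenvalue Bg (f t)" using fR eigenvalue_root_char_poly[OF Bgc] unfolding R_def by auto
      then have d: "det (char_matrix Bg (f t)) \<noteq> 0" using eigenvalue_det[OF Bgc] by auto
      have eq: "mat n n (\<lambda>(i,j). pth g t i j) = t \<cdot>\<^sub>m char_matrix Bg (f t)"
        by (rule eq_matI) (use t0 Bgc in \<open>auto simp: Bg_def char_matrix_def pth_def f_def idm_def field_simps\<close>)
      have "det (mat n n (\<lambda>(i,j). pth g t i j)) \<noteq> 0"
        unfolding eq det_smult using d t0 by simp
      moreover have "fin_block n (pth g t)" using g unfolding fin_block_def pth_def idm_def by auto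
      ultimately have "pth g t \<in> gl_inf" by (rule gl_from_mat[rotated])
      then show False using tn by simp
    qed
  qed
  have "finite (- {t. pth g t \<in> gl_inf})" by (rule finite_subset[OF sub]) (use fin in simp)
  then show ?thesis using infinite_UNIV_char_0[where 'a=complex] by (metis Compl_partition finite_UnI)
qed



definition lag :: "complex set \<Rightarrow> complex \<Rightarrow> complex poly" where
  "lag B b = (\<Prod>c\<in>B-{b}. Polynomial.smult (1/(b-c)) [:-c,1:])"

lemma lag_eval:
  assumes "finite B" "b \<in> B" "c \<in> B"
  shows "poly (lag B b) c = (if c = b then 1 else 0)"
proof (cases "c = b")
  case True
  have "poly (Polynomial.smult (1/(b-x)) [:-x,1:]) c = 1" if "x \<in> B - {b}" for x
    using that True by (auto simp: field_simps)
  then show ?thesis unfolding lag_def poly_prod using True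
    by (auto intro!: prod.neutral)
next
  case False
  then have "c \<in> B - {b}" using assms by auto
  then show ?thesis unfolding lag_def poly_prod using assms False
    by (auto intro!: prod_zero[OF _ bexI[of _ c]])
qed

lemma lag_deg:
  assumes "finite B" "b \<in> B"
  shows "degree (lag B b) \<le> card B - 1"
proof -
  have "degree (lag B b) \<le> (\<Sum>c\<in>B-{b}. degree (Polynomial.smult (1/(b-c)) [:-c,1:]))"
    using degree_prod_sum_le[of "B-{b}" "\<lambda>c. Polynomial.smult (1/(b-c)) [:-c,1:]"] assms
    unfolding lag_def comp_def by simp
  also have "\<dots> \<le> (\<Sum>c\<in>B-{b}. 1)"
    by (rule sum_mono) (simp add: degree_smult_le)
  also have "\<dots> \<le> card B - 1" using assms
    by (cases "b \<in> B") (auto simp: card_Diff_singleton diff_le_self card_mono)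
  finally show ?thesis .
qed

lemma lagrange:
  assumes B: "finite B" and d: "degree Q < card B"
  shows "Q = (\<Sum>b\<in>B. Polynomial.smult (poly Q b) (lag B b))"
proof (rule ccontr)
  define R where "R = Q - (\<Sum>b\<in>B. Polynomial.smult (poly Q b) (lag B b))"
  assume "Q \<noteq> (\<Sum>b\<in>B. Polynomial.smult (poly Q b) (lag B b))"
  then have R0: "R \<noteq> 0" unfolding R_def by simp
  have "degree (\<Sum>b\<in>B. Polynomial.smult (poly Q b) (lag B b)) \<le> card B - 1"
    by (rule degree_sum_le) (use B lag_deg[OF B] in \<open>auto intro: order.trans[OF degree_smult_le]\<close>)
  then have dR: "degree R \<le> card B - 1" unfolding R_def using d
    by (intro degree_diff_le) auto
  have "B \<subseteq> {x. poly R x = 0}"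
  proof
    fix c assume c: "c \<in> B"
    have "(\<Sum>b\<in>B. poly Q b * poly (lag B b) c) = (\<Sum>b\<in>B. if b = c then poly Q c else 0)"
      by (rule sum.cong) (auto simp: lag_eval[OF B _ c])
    also have "\<dots> = poly Q c" using B c by simp
    finally show "c \<in> {x. poly R x = 0}" unfolding R_def by (simp add: poly_sum)
  qed
  then have "card B \<le> card {x. poly R x = 0}"
    by (rule card_mono[OF poly_roots_finite[OF R0]])
  also have "\<dots> \<le> degree R" by (rule card_poly_roots_bound[OF R0])
  finally show False using dR d by linarith
qed

lemma poly_tens:
  assumes fin: "finite {l'. t0 l' \<noteq> 0}"
  shows "\<exists>Q. (\<forall>s l. tens_act (pth g s) k t0 l = poly (Q l) s) \<and> (\<forall>l. degree (Q l) \<le> k)"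
proof -
  define S where "S = {l'. t0 l' \<noteq> 0}"
  define Q where "Q l = (if length l = k then (\<Sum>l'\<in>S. Polynomial.smult (t0 l')
      (\<Prod>r<k. [:idm (l!r) (l'!r), g (l!r) (l'!r) - idm (l!r) (l'!r):])) else 0)" for l
  have 1: "tens_act (pth g s) k t0 l = poly (Q l) s" for s l
    unfolding tens_act_def Q_def S_def[symmetric]
    by (auto simp: poly_sum poly_prod pth_def algebra_simps intro!: sum.cong prod.cong)
  have 2: "degree (Q l) \<le> k" for l
  proof -
    have "degree (\<Prod>r<k. [:idm (l!r) (l'!r), g (l!r) (l'!r) - idm (l!r) (l'!r):]) \<le> k" for l'
    proof -
      have "degree (\<Prod>r<k. [:idm (l!r) (l'!r), g (l!r) (l'!r) - idm (l!r) (l'!r):])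
          \<le> (\<Sum>r<k. degree [:idm (l!r) (l'!r), g (l!r) (l'!r) - idm (l!r) (l'!r):])"
        using degree_prod_sum_le[of "{..<k}" "\<lambda>r. [:idm (l!r) (l'!r), g (l!r) (l'!r) - idm (l!r) (l'!r):]"]
        unfolding comp_def by simp
      also have "\<dots> \<le> (\<Sum>r<k. 1)" by (rule sum_mono) simp
      finally show ?thesis by simp
    qed
    then show ?thesis unfolding Q_def
      by (auto intro!: degree_sum_le order.trans[OF degree_smult_le] simp: S_def fin)
  qed
  show ?thesis using 1 2 by blast
qed

definition Ev :: "('j \<Rightarrow> nat) \<Rightarrow> ('j \<Rightarrow> nat list \<Rightarrow> complex) \<Rightarrow> nat" where
  "Ev deg v = Max (insert 0 ((\<lambda>(j,l). deg j) ` {(j,l). v j l \<noteq> 0}))"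

lemma poly_dsum:
  assumes v: "v \<in> dsum_space deg"
  shows "\<exists>Q. (\<forall>s j l. dsum_act deg (pth g s) v j l = poly (Q j l) s) \<and> (\<forall>j l. degree (Q j l) \<le> Ev deg v)"
proof -
  have finv: "finite {(j, l). v j l \<noteq> 0}" using v unfolding dsum_space_def by auto
  have "\<exists>Qj. (\<forall>s l. dsum_act deg (pth g s) v j l = poly (Qj l) s) \<and> (\<forall>l. degree (Qj l) \<le> Ev deg v)" for j
  proof (cases "\<exists>l. v j l \<noteq> 0")
    case True
    then obtain l0 where l0: "v j l0 \<noteq> 0" by auto
    have "deg j \<le> Ev deg v" unfolding Ev_def
      by (rule Max_ge) (use finv l0 in auto)
    moreover have "finite {l'. v j l' \<noteq> 0}"
    proof -
      have "{l'. v j l' \<noteq> 0} \<subseteq> snd ` {(j, l). v j l \<noteq> 0}" by force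
      then show ?thesis using finite_imageI[OF finv, of snd] by (rule finite_subset)
    qed
    ultimately show ?thesis using poly_tens[of "v j" g "deg j"] unfolding dsum_act_def
      by (meson order.trans)
  next
    case False
    then have "dsum_act deg (pth g s) v j l = poly 0 s" for s l
      unfolding dsum_act_def tens_act_def by auto
    then show ?thesis by (intro exI[of _ "\<lambda>l. 0"]) auto
  qed
  then show ?thesis by metis
qed



lemma pp_add:
  assumes pp: "poly_pres sc \<rho> deg W f" and "v \<in> W" "w \<in> W"
  shows "(\<lambda>j l. v j l + w j l) \<in> W" "f (\<lambda>j l. v j l + w j l) = f v + f w"
  using assms unfolding poly_pres_def by blast+

lemma pp_smult:
  assumes pp: "poly_pres sc \<rho> deg W f" and "v \<in> W"
  shows "(\<lambda>j l. c * v j l) \<in> W" "f (\<lambda>j l. c * v j l) = sc c (f v)"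
  using assms unfolding poly_pres_def by blast+

lemma pp_zero:
  assumes pp: "poly_pres sc \<rho> deg W f"
  shows "f (\<lambda>j l. 0) = 0"
proof -
  have z: "(\<lambda>j l. 0) \<in> W" using pp unfolding poly_pres_def by auto
  have "f (\<lambda>j l. (0::complex) + 0) = f (\<lambda>j l. 0) + f (\<lambda>j l. 0)"
    using pp_add(2)[OF pp z z] by simp
  then show ?thesis by simp
qed

lemma f_sum:
  assumes pp: "poly_pres sc \<rho> deg W f" and B: "finite B" and u: "\<forall>b\<in>B. u b \<in> W"
  shows "(\<lambda>j l. \<Sum>b\<in>B. c b * u b j l) \<in> W \<and> f (\<lambda>j l. \<Sum>b\<in>B. c b * u b j l) = (\<Sum>b\<in>B. sc (c b) (f (u b)))"
  using B u
proof (induction B rule: finite_induct)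
  case empty
  then show ?case using pp pp_zero[OF pp] unfolding poly_pres_def by simp
next
  case (insert x F)
  let ?r = "\<lambda>j l. \<Sum>b\<in>F. c b * u b j l"
  have r: "?r \<in> W" "f ?r = (\<Sum>b\<in>F. sc (c b) (f (u b)))" using insert by auto
  have ux: "u x \<in> W" using insert by auto
  note sx = pp_smult[OF pp ux, of "c x"]
  have eq: "(\<lambda>j l. \<Sum>b\<in>insert x F. c b * u b j l) = (\<lambda>j l. (\<lambda>j l. c x * u x j l) j l + ?r j l)"
    using insert by simp
  note pa = pp_add[OF pp sx(1) r(1)]
  have "(\<lambda>j l. (\<lambda>j l. c x * u x j l) j l + ?r j l) \<in> W"
    using pa(1) by simp
  moreover have "f (\<lambda>j l. (\<lambda>j l. c x * u x j l) j l + ?r j l) = f (\<lambda>j l. c x * u x j l) + f ?r"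
    using pa(2) by simp
  ultimately show ?case unfolding eq using sx r insert by simp
qed

lemma interp:
  assumes pp: "poly_pres sc \<rho> deg W f" and w: "w \<in> W" and B: "finite B"
    and Bg: "B \<subseteq> {t. pth g t \<in> gl_inf}" and card: "Ev deg w < card B"
    and t: "pth g t \<in> gl_inf"
  shows "\<rho> (pth g t) (f w) = (\<Sum>b\<in>B. sc (poly (lag B b) t) (\<rho> (pth g b) (f w)))"
proof -
  have wd: "w \<in> dsum_space deg" using pp w unfolding poly_pres_def by auto
  obtain Q where Q: "\<And>s j l. dsum_act deg (pth g s) w j l = poly (Q j l) s"
    and dQ: "\<And>j l. degree (Q j l) \<le> Ev deg w"
    using poly_dsum[OF wd, of g] by blast
  have eq: "dsum_act deg (pth g t) w = (\<lambda>j l. \<Sum>b\<in>B. poly (lag B b) t * dsum_act deg (pth g b) w j l)"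
  proof (intro ext)
    fix j l
    have "Q j l = (\<Sum>b\<in>B. Polynomial.smult (poly (Q j l) b) (lag B b))"
      by (rule lagrange[OF B]) (use dQ[of j l] card in linarith)
    then have "poly (Q j l) t = poly (\<Sum>b\<in>B. Polynomial.smult (poly (Q j l) b) (lag B b)) t" by simp
    then show "dsum_act deg (pth g t) w j l = (\<Sum>b\<in>B. poly (lag B b) t * dsum_act deg (pth g b) w j l)"
      by (simp add: Q poly_sum mult.commute)
  qed
  have u: "\<forall>b\<in>B. dsum_act deg (pth g b) w \<in> W" using pp w Bg unfolding poly_pres_def by auto
  have "\<rho> (pth g t) (f w) = f (dsum_act deg (pth g t) w)" using pp w t unfolding poly_pres_def by auto
  also have "\<dots> = (\<Sum>b\<in>B. sc (poly (lag B b) t) (f (dsum_act deg (pth g b) w)))"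
    unfolding eq using f_sum[OF pp B u, of "\<lambda>b. poly (lag B b) t"] by blast
  also have "\<dots> = (\<Sum>b\<in>B. sc (poly (lag B b) t) (\<rho> (pth g b) (f w)))"
    using pp w Bg unfolding poly_pres_def by (intro sum.cong) auto
  finally show ?thesis .
qed



definition rhom :: "(complex \<Rightarrow> 'a::comm_ring_1) \<Rightarrow> bool" where
  "rhom \<phi> = ((\<forall>c d. \<phi> (c+d) = \<phi> c + \<phi> d) \<and> (\<forall>c d. \<phi> (c*d) = \<phi> c * \<phi> d) \<and> \<phi> 1 = 1)"

lemma rhom_0: "rhom \<phi> \<Longrightarrow> \<phi> 0 = 0"
  unfolding rhom_def by (metis add.right_neutral add_left_imp_eq add_0)

lemma rhom_sum: "rhom \<phi> \<Longrightarrow> \<phi> (sum f A) = (\<Sum>a\<in>A. \<phi> (f a))"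
  by (induct A rule: infinite_finite_induct) (auto simp: rhom_0 rhom_def)

lemma rhom_pow: "rhom \<phi> \<Longrightarrow> \<phi> (c ^ n) = \<phi> c ^ n"
  by (induct n) (auto simp: rhom_def)

lemma phi_poly: "rhom \<phi> \<Longrightarrow> poly (map_poly \<phi> p) (\<phi> t) = \<phi> (poly p t)"
proof (induct p rule: pCons_induct)
  case 0
  then show ?case by (simp add: rhom_0)
next
  case (pCons a p)
  then show ?case by (simp add: map_poly_pCons rhom_0 rhom_def)
qed

lemma coeff_map_poly_phi: "rhom \<phi> \<Longrightarrow> coeff (map_poly \<phi> p) k = \<phi> (coeff p k)"
  by (rule coeff_map_poly) (rule rhom_0)

lemma poly_expand:
  fixes p :: "'a::comm_ring_1 poly"
  assumes "\<forall>k>K. coeff p k = 0"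
  shows "poly p x = (\<Sum>i\<le>K. coeff p i * x ^ i)"
proof -
  have d: "degree p \<le> K" using assms by (intro degree_le) auto
  have "poly p x = (\<Sum>i\<le>degree p. coeff p i * x ^ i)" by (rule poly_altdef)
  also have "\<dots> = (\<Sum>i\<le>K. coeff p i * x ^ i)"
    by (rule sum.mono_neutral_left) (use d in \<open>auto simp: coeff_eq_0\<close>)
  finally show ?thesis .
qed

lemma leib:
  fixes act :: "'a::comm_ring_1 \<Rightarrow> 'm::ab_group_add \<Rightarrow> 'm"
  assumes M: "Modules.module act" and h: "\<And>k. (\<Sum>i\<le>k. act (\<alpha> i) (\<mu> (k - i))) = 0"
  shows "act (\<alpha> 0 ^ Suc j) (\<mu> j) = 0"
proof (induction j rule: less_induct)
  interpret Modules.module act by (rule M)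
  case (less j)
  show ?case
  proof (cases j)
    case 0
    then show ?thesis using h[of 0] by (simp del: scale_scale)
  next
    case (Suc j')
    have "(\<Sum>i\<le>Suc j'. act (\<alpha> i) (\<mu> (Suc j' - i))) = 0" by (rule h)
    then have e: "act (\<alpha> 0) (\<mu> j) = - (\<Sum>i\<le>j'. act (\<alpha> (Suc i)) (\<mu> (j' - i)))"
      unfolding sum.atMost_Suc_shift Suc by (simp add: eq_neg_iff_add_eq_0)
    have t: "act (\<alpha> 0 ^ j) (act (\<alpha> (Suc i)) (\<mu> (j' - i))) = 0" if i: "i \<le> j'" for i
    proof -
      have jj: "j = i + Suc (j' - i)" using i Suc by simp
      have "\<alpha> 0 ^ j = \<alpha> 0 ^ i * \<alpha> 0 ^ Suc (j' - i)"
        by (subst jj) (rule power_add)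
      then have "act (\<alpha> 0 ^ j) (act (\<alpha> (Suc i)) (\<mu> (j' - i))) = act (\<alpha> 0 ^ i * \<alpha> (Suc i)) (act (\<alpha> 0 ^ Suc (j' - i)) (\<mu> (j' - i)))"
        by (simp add: ac_simps)
      also have "\<dots> = 0" using less.IH[of "j' - i"] Suc by simp
      finally show ?thesis .
    qed
    have "act (\<alpha> 0 ^ Suc j) (\<mu> j) = act (\<alpha> 0 ^ j) (act (\<alpha> 0) (\<mu> j))" by (simp add: ac_simps)
    also have "\<dots> = - (\<Sum>i\<le>j'. act (\<alpha> 0 ^ j) (act (\<alpha> (Suc i)) (\<mu> (j' - i))))"
      unfolding e by (simp add: scale_sum_right)
    also have "\<dots> = 0" using t by simp
    finally show ?thesis .
  qed
qed

lemma vander: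
  fixes act :: "'a::comm_ring_1 \<Rightarrow> 'm::ab_group_add \<Rightarrow> 'm"
  assumes M: "Modules.module act" and \<phi>: "rhom \<phi>" and T: "infinite T" and Bf: "finite Bm"
    and zero: "\<forall>t\<in>T. (\<Sum>b\<in>Bm. act (poly (P b) (\<phi> t)) (y b)) = 0"
    and deg: "\<forall>b\<in>Bm. \<forall>k>K. coeff (P b) k = 0"
  shows "(\<Sum>b\<in>Bm. act (coeff (P b) k) (y b)) = 0"
proof -
  interpret Modules.module act by (rule M)
  define c where "c k = (\<Sum>b\<in>Bm. act (coeff (P b) k) (y b))" for k
  have ev: "(\<Sum>b\<in>Bm. act (poly (P b) x) (y b)) = (\<Sum>i\<le>K. act (x ^ i) (c i))" for x
  proof -
    have "(\<Sum>b\<in>Bm. act (poly (P b) x) (y b)) = (\<Sum>b\<in>Bm. act (\<Sum>i\<le>K. coeff (P b) i * x ^ i) (y b))"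
    proof (rule sum.cong[OF refl])
      fix b assume "b \<in> Bm"
      then show "act (poly (P b) x) (y b) = act (\<Sum>i\<le>K. coeff (P b) i * x ^ i) (y b)"
        using poly_expand[of K "P b" x] deg by simp
    qed
    also have "\<dots> = (\<Sum>b\<in>Bm. \<Sum>i\<le>K. act (x ^ i) (act (coeff (P b) i) (y b)))"
      by (simp add: scale_sum_left ac_simps)
    also have "\<dots> = (\<Sum>i\<le>K. act (x ^ i) (c i))"
      unfolding c_def scale_sum_right by (rule sum.swap)
    finally show ?thesis .
  qed
  show ?thesis
  proof (cases "k \<le> K")
    case False
    then show ?thesis using deg by simp
  next
    case True
    obtain B where B: "finite B" "card B = Suc K" "B \<subseteq> T"
      using infinite_arbitrarily_large[OF T] by blast
    have delta: "(if i = k then 1 else 0) = (\<Sum>s\<in>B. s ^ i * coeff (lag B s) k)" if i: "i \<le> K" for i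
    proof -
      have "monom (1::complex) i = (\<Sum>s\<in>B. Polynomial.smult (poly (monom 1 i) s) (lag B s))"
        by (rule lagrange[OF B(1)]) (use i B(2) in \<open>simp add: degree_monom_eq\<close>)
      then have "coeff (monom (1::complex) i) k = coeff (\<Sum>s\<in>B. Polynomial.smult (poly (monom 1 i) s) (lag B s)) k"
        by simp
      then show ?thesis by (simp add: coeff_sum poly_monom coeff_monom)
    qed
    have "c k = (\<Sum>i\<le>K. act (\<phi> (if i = k then 1 else 0)) (c i))"
      using True by (simp add: rhom_0[OF \<phi>] if_distrib[of "\<lambda>z. act (\<phi> z) _"] cong: if_cong)
        (simp add: rhom_def[of \<phi>] \<phi>[unfolded rhom_def])
    also have "\<dots> = (\<Sum>i\<le>K. act (\<Sum>s\<in>B. \<phi> (coeff (lag B s) k) * \<phi> s ^ i) (c i))"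
      by (rule sum.cong) (use \<phi> in \<open>auto simp: delta rhom_sum rhom_pow ac_simps rhom_def\<close>)
    also have "\<dots> = (\<Sum>s\<in>B. act (\<phi> (coeff (lag B s) k)) (\<Sum>i\<le>K. act (\<phi> s ^ i) (c i)))"
      by (simp add: scale_sum_left scale_sum_right sum.swap[of _ "{..K}"])
    also have "\<dots> = 0"
    proof -
      have "(\<Sum>i\<le>K. act (\<phi> s ^ i) (c i)) = 0" if "s \<in> B" for s
        using zero B(3) that ev[of "\<phi> s"] unfolding c_def by auto
      then show ?thesis by simp
    qed
    finally show ?thesis unfolding c_def .
  qed
qed



theorem mainTheorem3:
  fixes sA :: "complex \<Rightarrow> 'a::comm_ring_1 \<Rightarrow> 'a"
    and \<rho>A :: "(nat \<Rightarrow> nat \<Rightarrow> complex) \<Rightarrow> 'a \<Rightarrow> 'a"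
    and act :: "'a \<Rightarrow> 'm::ab_group_add \<Rightarrow> 'm"
    and \<rho>M :: "(nat \<Rightarrow> nat \<Rightarrow> complex) \<Rightarrow> 'm \<Rightarrow> 'm"
    and a :: 'a and m :: 'm
  assumes "tca TYPE('j) sA \<rho>A"
    and "tca_module TYPE('k) sA \<rho>A act \<rho>M"
    and "act a m = 0"
  shows "\<exists>n::nat. n \<ge> 1 \<and> (\<forall>g\<in>gl_inf. act (a ^ n) (\<rho>M g m) = 0)"
proof -
  from assms(1) have VA: "Vector_Spaces.vector_space sA" and sAmul: "\<And>c x y. sA c (x*y) = sA c x * y"
    and prA: "poly_rep TYPE('j) sA \<rho>A" unfolding tca_def by auto
  from assms(2) have M: "Modules.module act" and prM: "poly_rep TYPE('k) (\<lambda>c x. act (sA c 1) x) \<rho>M"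
    and comp: "\<And>g a x. g \<in> gl_inf \<Longrightarrow> \<rho>M g (act a x) = act (\<rho>A g a) (\<rho>M g x)"
    unfolding tca_module_def by auto
  interpret A: Vector_Spaces.vector_space sA by (rule VA)
  interpret M: Modules.module act by (rule M)
  define \<phi> where "\<phi> c = sA c 1" for c
  have sA_eq: "sA c x = \<phi> c * x" for c x
    using sAmul[of c 1 x] unfolding \<phi>_def by simp
  have \<phi>: "rhom \<phi>" unfolding rhom_def
  proof (intro conjI allI)
    fix c d
    show "\<phi> (c + d) = \<phi> c + \<phi> d" unfolding \<phi>_def by (simp add: A.scale_left_distrib)
    show "\<phi> (c * d) = \<phi> c * \<phi> d"
      using A.scale_scale[of c d 1, symmetric] sA_eq[of c "sA d 1"] unfolding \<phi>_def by simp
    show "\<phi> 1 = 1" unfolding \<phi>_def by simp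
  qed
  have scM: "act (sA c 1) x = act (\<phi> c) x" for c x unfolding \<phi>_def ..
  obtain degA :: "'j \<Rightarrow> nat" and WA fA where ppA: "poly_pres sA \<rho>A degA WA fA" using prA unfolding poly_rep_def by blast
  obtain degM :: "'k \<Rightarrow> nat" and WM fM where ppM: "poly_pres (\<lambda>c x. act (sA c 1) x) \<rho>M degM WM fM"
    using prM unfolding poly_rep_def by blast
  have grA: "gl_rep sA \<rho>A" using prA unfolding poly_rep_def by blast
  have grM: "gl_rep (\<lambda>c x. act (sA c 1) x) \<rho>M" using prM unfolding poly_rep_def by blast
  have surjA: "fA ` WA = UNIV" using ppA unfolding poly_pres_def by blast
  have surjM: "fM ` WM = UNIV" using ppM unfolding poly_pres_def by blast
  obtain wa where wa: "wa \<in> WA" "fA wa = a" using surjA by (metis UNIV_I imageE)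
  obtain wm where wm: "wm \<in> WM" "fM wm = m" using surjM by (metis UNIV_I imageE)
  define E where "E = Ev degM wm"
  define KA where "KA = Ev degA wa"
  show ?thesis
  proof (intro exI[of _ "Suc E"] conjI ballI)
    show "1 \<le> Suc E" by simp
    fix g assume g: "g \<in> gl_inf"
    obtain n where gb: "fin_block n g" using g unfolding gl_inf_def by blast
    define T where "T = {t. pth g t \<in> gl_inf}"
    have Tinf: "infinite T" unfolding T_def by (rule good_infinite[OF gb])
    have p0: "pth g 0 = idm" by (intro ext) (simp add: pth_def)
    have p1: "pth g 1 = g" by (intro ext) (simp add: pth_def)
    have idm_gl: "idm \<in> gl_inf"
    proof -
      have b0: "fin_block 0 idm" unfolding fin_block_def by auto
      have "mmul idm idm = idm" by (intro ext) (simp add: mmul_block[OF b0 b0])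
      then show ?thesis unfolding gl_inf_def using b0 by blast
    qed
    have T0: "0 \<in> T" unfolding T_def using p0 idm_gl by simp
    have T1: "1 \<in> T" unfolding T_def using p1 g by simp
    obtain BA where BA: "finite BA" "card BA = Suc KA" "BA \<subseteq> T"
      using infinite_arbitrarily_large[OF Tinf] by blast
    obtain BM where BM: "finite BM" "card BM = Suc E" "BM \<subseteq> T"
      using infinite_arbitrarily_large[OF Tinf] by blast
    define yA where "yA b = \<rho>A (pth g b) a" for b
    define yM where "yM b = \<rho>M (pth g b) m" for b
    have IA: "\<rho>A (pth g t) a = (\<Sum>b\<in>BA. \<phi> (poly (lag BA b) t) * yA b)" if t: "t \<in> T" for t
      using interp[OF ppA wa(1) BA(1) BA(3)[unfolded T_def], of t] t BA(2)
      unfolding wa(2) yA_def T_def KA_def by (simp add: sA_eq)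
    have IM: "\<rho>M (pth g t) m = (\<Sum>b\<in>BM. act (\<phi> (poly (lag BM b) t)) (yM b))" if t: "t \<in> T" for t
      using interp[OF ppM wm(1) BM(1) BM(3)[unfolded T_def], of t] t BM(2)
      unfolding wm(2) yM_def T_def E_def by (simp add: scM)
    define \<alpha>p where "\<alpha>p = (\<Sum>b\<in>BA. Polynomial.smult (yA b) (map_poly \<phi> (lag BA b)))"
    define L\<phi> where "L\<phi> b = map_poly \<phi> (lag BM b)" for b
    have \<alpha>ev: "\<rho>A (pth g t) a = poly \<alpha>p (\<phi> t)" if t: "t \<in> T" for t
      unfolding IA[OF t] \<alpha>p_def by (simp add: poly_sum phi_poly[OF \<phi>] mult.commute)
    have \<mu>ev: "\<rho>M (pth g t) m = (\<Sum>b\<in>BM. act (poly (L\<phi> b) (\<phi> t)) (yM b))" if t: "t \<in> T" for t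
      unfolding IM[OF t] L\<phi>_def by (simp add: phi_poly[OF \<phi>])
    have zero: "\<forall>t\<in>T. (\<Sum>b\<in>BM. act (poly (\<alpha>p * L\<phi> b) (\<phi> t)) (yM b)) = 0"
    proof
      fix t assume t: "t \<in> T"
      then have tg: "pth g t \<in> gl_inf" unfolding T_def by simp
      have lin: "Vector_Spaces.linear (\<lambda>c x. act (sA c 1) x) (\<lambda>c x. act (sA c 1) x) (\<rho>M (pth g t))"
        using grM tg unfolding gl_rep_def by blast
      interpret L: Vector_Spaces.linear "\<lambda>c x. act (sA c 1) x" "\<lambda>c x. act (sA c 1) x" "\<rho>M (pth g t)"
        by (rule lin)
      have "\<rho>M (pth g t) 0 = 0" by (rule L.zero)
      then have "0 = \<rho>M (pth g t) (act a m)" using assms(3) by simp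
      also have "\<dots> = act (poly \<alpha>p (\<phi> t)) (\<Sum>b\<in>BM. act (poly (L\<phi> b) (\<phi> t)) (yM b))"
        using comp[OF tg] \<alpha>ev[OF t] \<mu>ev[OF t] by simp
      also have "\<dots> = (\<Sum>b\<in>BM. act (poly (\<alpha>p * L\<phi> b) (\<phi> t)) (yM b))"
        by (simp add: M.scale_sum_right)
      finally show "(\<Sum>b\<in>BM. act (poly (\<alpha>p * L\<phi> b) (\<phi> t)) (yM b)) = 0" by simp
    qed
    have clag: "coeff (lag B b) k = 0" if "finite B" "b \<in> B" "k > card B - 1" for B b k
      using lag_deg[OF that(1,2)] that(3) by (intro coeff_eq_0) simp
    have c\<alpha>: "coeff \<alpha>p k = 0" if "k > KA" for k
      unfolding \<alpha>p_def using that BA by (simp add: coeff_sum coeff_map_poly_phi[OF \<phi>] clag rhom_0[OF \<phi>])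
    have cL: "coeff (L\<phi> b) k = 0" if "b \<in> BM" "k > E" for b k
      unfolding L\<phi>_def using that BM by (simp add: coeff_map_poly_phi[OF \<phi>] clag rhom_0[OF \<phi>])
    have cP: "\<forall>b\<in>BM. \<forall>k>KA + E. coeff (\<alpha>p * L\<phi> b) k = 0"
    proof (intro ballI allI impI)
      fix b k assume b: "b \<in> BM" and k: "k > KA + E"
      have "coeff \<alpha>p i * coeff (L\<phi> b) (k - i) = 0" if "i \<le> k" for i
      proof (cases "i > KA")
        case True then show ?thesis using c\<alpha> by simp
      next
        case False then show ?thesis using cL[OF b] k that by simp
      qed
      then show "coeff (\<alpha>p * L\<phi> b) k = 0" unfolding coeff_mult by simp
    qed
    have V: "(\<Sum>b\<in>BM. act (coeff (\<alpha>p * L\<phi> b) k) (yM b)) = 0" for k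
      by (rule vander[OF M \<phi> Tinf BM(1) zero cP])
    define \<mu>c where "\<mu>c j = (\<Sum>b\<in>BM. act (coeff (L\<phi> b) j) (yM b))" for j
    have conv: "(\<Sum>i\<le>k. act (coeff \<alpha>p i) (\<mu>c (k - i))) = 0" for k
    proof -
      have "(\<Sum>i\<le>k. act (coeff \<alpha>p i) (\<mu>c (k - i)))
          = (\<Sum>i\<le>k. \<Sum>b\<in>BM. act (coeff \<alpha>p i * coeff (L\<phi> b) (k - i)) (yM b))"
        unfolding \<mu>c_def by (simp add: M.scale_sum_right)
      also have "\<dots> = (\<Sum>b\<in>BM. \<Sum>i\<le>k. act (coeff \<alpha>p i * coeff (L\<phi> b) (k - i)) (yM b))"
        by (rule sum.swap)
      also have "\<dots> = (\<Sum>b\<in>BM. act (coeff (\<alpha>p * L\<phi> b) k) (yM b))"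
        by (simp add: coeff_mult M.scale_sum_left)
      finally show ?thesis using V by simp
    qed
    have L: "act (coeff \<alpha>p 0 ^ Suc j) (\<mu>c j) = 0" for j
      by (rule leib[OF M conv])
    have a0: "coeff \<alpha>p 0 = a"
    proof -
      have "coeff \<alpha>p 0 = poly \<alpha>p (\<phi> 0)" by (simp add: rhom_0[OF \<phi>] poly_0_coeff_0)
      also have "\<dots> = \<rho>A (pth g 0) a" using \<alpha>ev[OF T0] by simp
      also have "\<dots> = a" using grA unfolding p0 gl_rep_def by simp
      finally show ?thesis .
    qed
    have gm: "\<rho>M g m = (\<Sum>j\<le>E. \<mu>c j)"
    proof -
      have "\<rho>M g m = (\<Sum>b\<in>BM. act (poly (L\<phi> b) 1) (yM b))"
        using \<mu>ev[OF T1] unfolding p1 using \<phi> by (simp add: rhom_def)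
      also have "\<dots> = (\<Sum>b\<in>BM. act (\<Sum>j\<le>E. coeff (L\<phi> b) j) (yM b))"
      proof (rule sum.cong[OF refl])
        fix b assume b: "b \<in> BM"
        show "act (poly (L\<phi> b) 1) (yM b) = act (\<Sum>j\<le>E. coeff (L\<phi> b) j) (yM b)"
          using poly_expand[of E "L\<phi> b" 1] cL[OF b] by simp
      qed
      also have "\<dots> = (\<Sum>j\<le>E. \<mu>c j)"
        unfolding \<mu>c_def M.scale_sum_left by (rule sum.swap)
      finally show ?thesis .
    qed
    have "act (a ^ Suc E) (\<mu>c j) = 0" if "j \<le> E" for j
    proof -
      have jj: "Suc E = (E - j) + Suc j" using that by simp
      have "a ^ Suc E = a ^ (E - j) * a ^ Suc j"
        by (subst jj) (rule power_add)
      then show ?thesis using L[of j] a0 by (simp del: M.scale_scale add: M.scale_scale[symmetric])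
    qed
    then show "act (a ^ Suc E) (\<rho>M g m) = 0"
      unfolding gm M.scale_sum_right by simp
  qed
qed


end
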